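(* Let $H$ be a digraph and $\delta>0$. Then \[ G(H,\delta)\le F(H,\delta)\le2G(H,\delta). \]
   Context: A digraph has no self-loops and at most one directed edge per ordered pair; degree = in-degree + out-degree; $\Delta$ is the maximum degree of $H$. $H^*$ is the induced subgraph on vertices of degree $\Delta$; $\mathcal S_H$ is the collection of independent sets of $H^*$ (including $\emptyset$). For $S\in\mathcal S_H$: $T=\mathsf N(S)$ is the set of vertices outside $S$ adjacent in either direction to $S$; $\mathsf N^+(S)$ (resp. $\mathsf N^-(S)$) is the set of $v\notin S$ with an edge $(u,v)$ (resp. $(v,u)$) for some $u\in S$; $A_S=|\mathsf N^+(S)|$, $B_S=|\mathsf N^-(S)|$; $\mathsf E(S,T)$, $\mathsf E(T,S)$ are the sets of edges from $S$ to $T$ and from $T$ to $S$; $F_S$ is the bipartite digraph on $S\cup T$ with edges $\mathsf E(S,T)\cup\mathsf E(T,S)$. A maximum fractional matching of $F_S$ is $w:\mathsf E(F_S)\to[0,1]$ with $\sum_{e\ni v}w(e)\le1$ for all vertices and equality for $v\in S$; $a_S=\max_w\sum_{e\in\mathsf E(S,T)}w(e)$, $b_S=\max_w\sum_{e\in\mathsf E(T,S)}w(e)$. $\mathsf v^+(S),\mathsf v^-(S),\mathsf v^{\pm}(S)$ count vertices of $S$ with no in-neighbours, no out-neighbours, and both. Define \[ f_H=\sum_{S\in\mathcal S_H}x_1^{\mathsf v^+(S)}x_2^{\mathsf v^-(S)}(x_1\wedge x_2)^{\mathsf v^{\pm}(S)}y_1^{A_S}y_2^{B_S},\quad g_H=\sum_{S\in\mathcal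 S_H}x_1^{\mathsf v^+(S)}x_2^{\mathsf v^-(S)}(x_1\wedge x_2)^{\mathsf v^{\pm}(S)}y_1^{a_S}y_2^{b_S}, \] as functions of $(x_1,x_2,y_1,y_2)$, and $F(H,\delta)=\inf\{x_1y_1+x_2y_2: f_H=1+\delta\}$, $G(H,\delta)=\inf\{x_1y_1+x_2y_2: g_H=1+\delta\}$, both infima over $x_1,x_2\ge0$, $0\le y_1,y_2\le1$. *)

theory Defs
  imports Complex_Main "HOL-Library.Extended_Real"
begin

text \<open>A digraph H is given by a finite vertex set V and an edge set E \<subseteq> V \<times> V
  without self-loops (a set of ordered pairs, so at most one edge per ordered pair).\<close>

definition outdeg :: "('a \<times> 'a) set \<Rightarrow> 'a \<Rightarrow> nat" where
  "outdeg E v = card {u. (v, u) \<in> E}"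

definition indeg :: "('a \<times> 'a) set \<Rightarrow> 'a \<Rightarrow> nat" where
  "indeg E v = card {u. (u, v) \<in> E}"

definition deg :: "('a \<times> 'a) set \<Rightarrow> 'a \<Rightarrow> nat" where
  "deg E v = indeg E v + outdeg E v"

definition maxdeg :: "'a set \<Rightarrow> ('a \<times> 'a) set \<Rightarrow> nat" where
  "maxdeg V E = Max (deg E ` V)"

definition maxdeg_verts :: "'a set \<Rightarrow> ('a \<times> 'a) set \<Rightarrow> 'a set" where
  "maxdeg_verts V E = {v \<in> V. deg E v = maxdeg V E}"

definition indep_sets :: "'a set \<Rightarrow> ('a \<times> 'a) set \<Rightarrow> 'a set set" where
  "indep_sets V E = {S. S \<subseteq> maxdeg_verts V E \<and> (\<forall>u\<in>S. \<forall>v\<in>S. (u, v) \<notin> E)}"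

definition out_nbhd :: "('a \<times> 'a) set \<Rightarrow> 'a set \<Rightarrow> 'a set" where
  "out_nbhd E S = {v. v \<notin> S \<and> (\<exists>u\<in>S. (u, v) \<in> E)}"

definition in_nbhd :: "('a \<times> 'a) set \<Rightarrow> 'a set \<Rightarrow> 'a set" where
  "in_nbhd E S = {v. v \<notin> S \<and> (\<exists>u\<in>S. (v, u) \<in> E)}"

definition nbhd :: "('a \<times> 'a) set \<Rightarrow> 'a set \<Rightarrow> 'a set" where
  "nbhd E S = out_nbhd E S \<union> in_nbhd E S"

definition edges_between :: "('a \<times> 'a) set \<Rightarrow> 'a set \<Rightarrow> 'a set \<Rightarrow> ('a \<times> 'a) set" where
  "edges_between E X Y = {e \<in> E. fst e \<in> X \<and> snd e \<in> Y}"

definition FS_edges :: "('a \<times> 'a) set \<Rightarrow> 'a set \<Rightarrow> ('a \<times> 'a) set" where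
  "FS_edges E S = edges_between E S (nbhd E S) \<union> edges_between E (nbhd E S) S"

definition max_frac_matching :: "('a \<times> 'a) set \<Rightarrow> 'a set \<Rightarrow> ('a \<times> 'a \<Rightarrow> real) \<Rightarrow> bool" where
  "max_frac_matching E S w \<longleftrightarrow>
     (\<forall>e\<in>FS_edges E S. 0 \<le> w e \<and> w e \<le> 1) \<and>
     (\<forall>v \<in> S \<union> nbhd E S. (\<Sum>e\<in>{e\<in>FS_edges E S. fst e = v \<or> snd e = v}. w e) \<le> 1) \<and>
     (\<forall>v \<in> S. (\<Sum>e\<in>{e\<in>FS_edges E S. fst e = v \<or> snd e = v}. w e) = 1)"

text \<open>a_S and b_S (maximum over the feasible w; convention 0 if no such w exists,
  which can only happen when H has no edges).\<close>
definition a_S :: "('a \<times> 'a) set \<Rightarrow> 'a set \<Rightarrow> real" where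
  "a_S E S = (if \<exists>w. max_frac_matching E S w then
      Sup {(\<Sum>e\<in>edges_between E S (nbhd E S). w e) | w. max_frac_matching E S w} else 0)"

definition b_S :: "('a \<times> 'a) set \<Rightarrow> 'a set \<Rightarrow> real" where
  "b_S E S = (if \<exists>w. max_frac_matching E S w then
      Sup {(\<Sum>e\<in>edges_between E (nbhd E S) S. w e) | w. max_frac_matching E S w} else 0)"

definition v_plus :: "('a \<times> 'a) set \<Rightarrow> 'a set \<Rightarrow> nat" where
  "v_plus E S = card {v\<in>S. indeg E v = 0}"

definition v_minus :: "('a \<times> 'a) set \<Rightarrow> 'a set \<Rightarrow> nat" where
  "v_minus E S = card {v\<in>S. outdeg E v = 0}"

definition v_pm :: "('a \<times> 'a) set \<Rightarrow> 'a set \<Rightarrow> nat" where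
  "v_pm E S = card {v\<in>S. indeg E v \<noteq> 0 \<and> outdeg E v \<noteq> 0}"

text \<open>real power with the convention y^0 = 1 (also for y = 0)\<close>
definition rpow :: "real \<Rightarrow> real \<Rightarrow> real" where
  "rpow y a = (if a = 0 then 1 else y powr a)"

definition f_H :: "'a set \<Rightarrow> ('a \<times> 'a) set \<Rightarrow> real \<Rightarrow> real \<Rightarrow> real \<Rightarrow> real \<Rightarrow> real" where
  "f_H V E x1 x2 y1 y2 = (\<Sum>S\<in>indep_sets V E.
      x1 ^ v_plus E S * x2 ^ v_minus E S * (min x1 x2) ^ v_pm E S
      * y1 ^ card (out_nbhd E S) * y2 ^ card (in_nbhd E S))"

definition g_H :: "'a set \<Rightarrow> ('a \<times> 'a) set \<Rightarrow> real \<Rightarrow> real \<Rightarrow> real \<Rightarrow> real \<Rightarrow> real" where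
  "g_H V E x1 x2 y1 y2 = (\<Sum>S\<in>indep_sets V E.
      x1 ^ v_plus E S * x2 ^ v_minus E S * (min x1 x2) ^ v_pm E S
      * rpow y1 (a_S E S) * rpow y2 (b_S E S))"

text \<open>infima taken in the extended reals (infimum of the empty set is +\<infinity>)\<close>
definition F_H :: "'a set \<Rightarrow> ('a \<times> 'a) set \<Rightarrow> real \<Rightarrow> ereal" where
  "F_H V E \<delta> = Inf {ereal (x1 * y1 + x2 * y2) | x1 x2 y1 y2.
      0 \<le> x1 \<and> 0 \<le> x2 \<and> 0 \<le> y1 \<and> y1 \<le> 1 \<and> 0 \<le> y2 \<and> y2 \<le> 1 \<and>
      f_H V E x1 x2 y1 y2 = 1 + \<delta>}"

definition G_H :: "'a set \<Rightarrow> ('a \<times> 'a) set \<Rightarrow> real \<Rightarrow> ereal" where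
  "G_H V E \<delta> = Inf {ereal (x1 * y1 + x2 * y2) | x1 x2 y1 y2.
      0 \<le> x1 \<and> 0 \<le> x2 \<and> 0 \<le> y1 \<and> y1 \<le> 1 \<and> 0 \<le> y2 \<and> y2 \<le> 1 \<and>
      g_H V E x1 x2 y1 y2 = 1 + \<delta>}"

end

theory Submission
  imports Defs
begin


lemma rpow_nonneg: "0 \<le> y \<Longrightarrow> 0 \<le> rpow y a"
  by (simp add: rpow_def)

lemma rpow_le1: "0 \<le> y \<Longrightarrow> y \<le> 1 \<Longrightarrow> 0 \<le> a \<Longrightarrow> rpow y a \<le> 1"
  unfolding rpow_def using powr_mono'[of 0 a y] by (cases "y = 0") auto

lemma rpow_mono: assumes "0 \<le> y" "y \<le> 1" "0 \<le> b" "b \<le> a"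
  shows "rpow y a \<le> rpow y b"
proof (cases "b = 0")
  case True then show ?thesis using rpow_le1[OF assms(1,2)] assms by (simp add: rpow_def)
next
  case False then show ?thesis using assms powr_mono'[of b a y] by (auto simp: rpow_def)
qed

lemma rpow_nat: assumes "0 \<le> y" shows "rpow y (real n) = y ^ n"
  using assms by (cases "y = 0") (auto simp: rpow_def powr_realpow)

lemma pow_le_rpow: assumes "0 \<le> y" "y \<le> 1" "0 \<le> a" "a \<le> real n"
  shows "y ^ n \<le> rpow y a"
  using rpow_mono[OF assms] rpow_nat[OF assms(1)] by simp

lemma key_L0:
  fixes y1 y2 \<rho> :: real and p q r :: nat
  assumes y: "0 \<le> y1" "y1 \<le> 1" "0 \<le> y2" "y2 \<le> 1" and rho: "0 \<le> \<rho>" "\<rho> \<le> r"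
  shows "rpow y1 (p + \<rho>) * rpow y2 (q + (r - \<rho>)) \<le> y1^p * y2^q * (max y1 y2)^r"
proof -
  define M where "M = max y1 y2"
  consider "y1 > 0" "y2 > 0" | "y1 = 0" | "y2 = 0" using y by linarith
  then show ?thesis
  proof cases
    case 1
    have M: "M > 0" using 1 by (simp add: M_def)
    have e1: "rpow y1 (p + \<rho>) = y1^p * y1 powr \<rho>"
    proof (cases "real p + \<rho> = 0")
      case True
      then have "p = 0" "\<rho> = 0" using rho by linarith+
      then show ?thesis using 1 by (simp add: rpow_def)
    qed (use 1 in \<open>simp add: rpow_def powr_add powr_realpow\<close>)
    have e2: "rpow y2 (q + (r - \<rho>)) = y2^q * y2 powr (r - \<rho>)"
    proof (cases "real q + (r - \<rho>) = 0")
      case True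
      then have "q = 0" "r - \<rho> = 0" using rho by linarith+
      then show ?thesis using 1 by (simp add: rpow_def)
    qed (use 1 in \<open>simp add: rpow_def powr_add powr_realpow\<close>)
    have m1: "y1 powr \<rho> \<le> M powr \<rho>" using powr_mono2[of \<rho> y1 M] rho y by (simp add: M_def)
    have m2: "y2 powr (r - \<rho>) \<le> M powr (r - \<rho>)" using powr_mono2[of "r - \<rho>" y2 M] rho y by (simp add: M_def)
    have "y1 powr \<rho> * y2 powr (r - \<rho>) \<le> M powr \<rho> * M powr (r - \<rho>)"
      by (rule mult_mono[OF m1 m2]) auto
    also have "\<dots> = M ^ r" using M by (simp add: powr_add[symmetric] powr_realpow)
    finally have "y1 powr \<rho> * y2 powr (r - \<rho>) \<le> M ^ r" .
    then have "y1^p * y2^q * (y1 powr \<rho> * y2 powr (r - \<rho>)) \<le> y1^p * y2^q * M^r"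
      by (rule mult_left_mono) (use y in auto)
    then show ?thesis unfolding e1 e2 M_def by (simp add: mult_ac)
  next
    case 2
    show ?thesis
    proof (cases "p + \<rho> = 0")
      case False
      then show ?thesis using 2 y by (simp add: rpow_def)
    next
      case True
      then have p0: "p = 0" "\<rho> = 0" using rho by linarith+
      have "rpow y2 (real (q + r)) = y2 ^ (q + r)" by (rule rpow_nat) (use y in auto)
      then show ?thesis using 2 p0 y by (simp add: rpow_def max_def power_add)
    qed
  next
    case 3
    show ?thesis
    proof (cases "q + (r - \<rho>) = 0")
      case False
      then show ?thesis using 3 y by (simp add: rpow_def)
    next
      case True
      then have p0: "q = 0" "\<rho> = r" using rho by linarith+
      have "rpow y1 (real (p + r)) = y1 ^ (p + r)" by (rule rpow_nat) (use y in auto)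
      then show ?thesis using 3 p0 y by (simp add: rpow_def max_def power_add)
    qed
  qed
qed

lemma key_L:
  fixes y1 y2 a b \<alpha> \<beta> :: real and p q r :: nat
  assumes y: "0 \<le> y1" "y1 \<le> 1" "0 \<le> y2" "y2 \<le> 1"
    and "\<alpha> \<le> a" "\<beta> \<le> b" "p \<le> \<alpha>" "q \<le> \<beta>" "\<alpha> + \<beta> = p + q + r"
  shows "rpow y1 a * rpow y2 b \<le> y1^p * y2^q * (max y1 y2)^r"
proof -
  define \<rho> where "\<rho> = \<alpha> - p"
  have r: "0 \<le> \<rho>" "\<rho> \<le> r" using assms by (auto simp: \<rho>_def)
  have a: "\<alpha> = p + \<rho>" and b: "\<beta> = q + (r - \<rho>)" using assms by (auto simp: \<rho>_def)
  have "rpow y1 a * rpow y2 b \<le> rpow y1 \<alpha> * rpow y2 \<beta>"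
    apply (rule mult_mono)
    using rpow_mono[of y1 \<alpha> a] rpow_mono[of y2 \<beta> b] assms r a b rpow_nonneg by auto
  also have "\<dots> \<le> y1^p * y2^q * (max y1 y2)^r" unfolding a b by (rule key_L0[OF y r])
  finally show ?thesis .
qed



definition nexp :: "('a \<times> 'a) set \<Rightarrow> 'a set \<Rightarrow> nat" where
  "nexp E S = v_plus E S + v_minus E S + v_pm E S"

definition fterm :: "('a \<times> 'a) set \<Rightarrow> real \<Rightarrow> real \<Rightarrow> real \<Rightarrow> real \<Rightarrow> 'a set \<Rightarrow> real" where
  "fterm E x1 x2 y1 y2 S = x1 ^ v_plus E S * x2 ^ v_minus E S * (min x1 x2) ^ v_pm E S
      * y1 ^ card (out_nbhd E S) * y2 ^ card (in_nbhd E S)"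

definition gterm :: "('a \<times> 'a) set \<Rightarrow> real \<Rightarrow> real \<Rightarrow> real \<Rightarrow> real \<Rightarrow> 'a set \<Rightarrow> real" where
  "gterm E x1 x2 y1 y2 S = x1 ^ v_plus E S * x2 ^ v_minus E S * (min x1 x2) ^ v_pm E S
      * rpow y1 (a_S E S) * rpow y2 (b_S E S)"

lemma f_H_sum: "f_H V E x1 x2 y1 y2 = (\<Sum>S\<in>indep_sets V E. fterm E x1 x2 y1 y2 S)"
  unfolding f_H_def fterm_def ..

lemma g_H_sum: "g_H V E x1 x2 y1 y2 = (\<Sum>S\<in>indep_sets V E. gterm E x1 x2 y1 y2 S)"
  unfolding g_H_def gterm_def ..

lemma fterm_scale: "0 \<le> t \<Longrightarrow> fterm E (t*x1) (t*x2) y1 y2 S = t ^ nexp E S * fterm E x1 x2 y1 y2 S"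
proof -
  assume t: "0 \<le> t"
  have m: "min (t*x1) (t*x2) = t * min x1 x2" using t by (simp add: min_mult_distrib_left)
  show ?thesis unfolding fterm_def nexp_def m power_mult_distrib power_add by (simp add: mult_ac)
qed

lemma gterm_scale: "0 \<le> t \<Longrightarrow> gterm E (t*x1) (t*x2) y1 y2 S = t ^ nexp E S * gterm E x1 x2 y1 y2 S"
proof -
  assume t: "0 \<le> t"
  have m: "min (t*x1) (t*x2) = t * min x1 x2" using t by (simp add: min_mult_distrib_left)
  show ?thesis unfolding gterm_def nexp_def m power_mult_distrib power_add by (simp add: mult_ac)
qed

lemma indep_sub: "S \<in> indep_sets V E \<Longrightarrow> S \<subseteq> V"
  unfolding indep_sets_def maxdeg_verts_def by auto

lemma finite_indep: "finite V \<Longrightarrow> finite (indep_sets V E)"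
  by (rule finite_subset[of _ "Pow V"]) (auto dest: indep_sub)

lemma empty_indep: "{} \<in> indep_sets V E"
  unfolding indep_sets_def by auto

lemma nexp_empty: "nexp E {} = 0"
  unfolding nexp_def v_plus_def v_minus_def v_pm_def by simp

lemma card_pos_mem: "finite S \<Longrightarrow> u \<in> S \<Longrightarrow> P u \<Longrightarrow> 0 < card {v\<in>S. P v}"
  by (subst card_gt_0_iff) auto

lemma nexp_pos: assumes "finite V" "S \<in> indep_sets V E" "S \<noteq> {}" shows "0 < nexp E S"
proof -
  have fS: "finite S" using finite_subset[OF indep_sub[OF assms(2)] assms(1)] .
  obtain u where u: "u \<in> S" using assms(3) by blast
  show ?thesis
  proof (cases "indeg E u = 0")
    case True
    then show ?thesis using card_pos_mem[OF fS u, of "\<lambda>v. indeg E v = 0"] by (simp add: nexp_def v_plus_def)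
  next
    case F1: False
    show ?thesis
    proof (cases "outdeg E u = 0")
      case True
      then show ?thesis using card_pos_mem[OF fS u, of "\<lambda>v. outdeg E v = 0"] by (simp add: nexp_def v_minus_def)
    next
      case False
      then show ?thesis using F1 card_pos_mem[OF fS u, of "\<lambda>v. indeg E v \<noteq> 0 \<and> outdeg E v \<noteq> 0"]
        by (simp add: nexp_def v_pm_def)
    qed
  qed
qed

lemma nbhd_empty: "nbhd E {} = {}" "out_nbhd E {} = {}" "in_nbhd E {} = {}"
  unfolding nbhd_def out_nbhd_def in_nbhd_def by auto

lemma FS_empty: "FS_edges E {} = {}"
  unfolding FS_edges_def edges_between_def by auto

lemma mfm_empty: "max_frac_matching E {} w"
  unfolding max_frac_matching_def FS_empty nbhd_empty by simp

lemma aS_empty: "a_S E {} = 0" and bS_empty: "b_S E {} = 0"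
  unfolding a_S_def b_S_def using mfm_empty by (simp_all add: edges_between_def nbhd_empty)

lemma fterm_empty: "fterm E x1 x2 y1 y2 {} = 1"
  unfolding fterm_def v_plus_def v_minus_def v_pm_def nbhd_empty by simp

lemma gterm_empty: "gterm E x1 x2 y1 y2 {} = 1"
  unfolding gterm_def v_plus_def v_minus_def v_pm_def aS_empty bS_empty by (simp add: rpow_def)

lemma ivt_sum:
  fixes K :: "'b set \<Rightarrow> real" and n :: "'b set \<Rightarrow> nat"
  assumes "finite I" "{} \<in> I" "K {} = 1" "n {} = 0" "\<And>S. S \<in> I \<Longrightarrow> S \<noteq> {} \<Longrightarrow> 0 < n S"
    and "1 + \<delta> \<le> (\<Sum>S\<in>I. K S)" "0 < \<delta>"
  shows "\<exists>t. 0 \<le> t \<and> t \<le> 1 \<and> (\<Sum>S\<in>I. t ^ n S * K S) = 1 + \<delta>"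
proof -
  let ?h = "\<lambda>t::real. \<Sum>S\<in>I. t ^ n S * K S"
  have h0: "?h 0 = 1"
  proof -
    have "?h 0 = 0 ^ n {} * K {} + (\<Sum>S\<in>I - {{}}. 0 ^ n S * K S)"
      using assms(1,2) by (simp add: sum.remove)
    also have "(\<Sum>S\<in>I - {{}}. (0::real) ^ n S * K S) = 0"
      by (rule sum.neutral) (use assms(5) in auto)
    finally show ?thesis using assms(3,4) by simp
  qed
  have h1: "?h 1 = (\<Sum>S\<in>I. K S)" by simp
  have "\<exists>t. 0 \<le> t \<and> t \<le> 1 \<and> ?h t = 1 + \<delta>"
    by (rule IVT) (use h0 h1 assms(6,7) in \<open>auto intro!: continuous_intros\<close>)
  then show ?thesis .
qed

lemma point_f:
  assumes "finite V" "0 \<le> x1" "0 \<le> x2" "0 \<le> y1" "0 \<le> y2" "1 + \<delta> \<le> f_H V E x1 x2 y1 y2" "0 < \<delta>"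
  shows "\<exists>x1' x2'. 0 \<le> x1' \<and> 0 \<le> x2' \<and> f_H V E x1' x2' y1 y2 = 1 + \<delta> \<and>
     x1' * y1 + x2' * y2 \<le> x1 * y1 + x2 * y2"
proof -
  obtain t where t: "0 \<le> t" "t \<le> 1"
    "(\<Sum>S\<in>indep_sets V E. t ^ nexp E S * fterm E x1 x2 y1 y2 S) = 1 + \<delta>"
    using ivt_sum[of "indep_sets V E" "fterm E x1 x2 y1 y2" "nexp E" \<delta>, OF finite_indep[OF assms(1)] empty_indep fterm_empty nexp_empty nexp_pos[OF assms(1)]
       assms(6)[unfolded f_H_sum] assms(7)] by blast
  have "f_H V E (t*x1) (t*x2) y1 y2 = 1 + \<delta>"
    unfolding f_H_sum using t by (simp add: fterm_scale)
  moreover have "(t*x1) * y1 + (t*x2) * y2 \<le> x1 * y1 + x2 * y2"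
  proof -
    have "(t*x1) * y1 + (t*x2) * y2 = t * (x1 * y1 + x2 * y2)" by algebra
    also have "\<dots> \<le> 1 * (x1 * y1 + x2 * y2)"
      by (rule mult_right_mono) (use t assms in auto)
    finally show ?thesis by simp
  qed
  ultimately show ?thesis using t assms by (intro exI[of _ "t*x1"] exI[of _ "t*x2"]) auto
qed

lemma point_g:
  assumes "finite V" "0 \<le> x1" "0 \<le> x2" "0 \<le> y1" "0 \<le> y2" "1 + \<delta> \<le> g_H V E x1 x2 y1 y2" "0 < \<delta>"
  shows "\<exists>x1' x2'. 0 \<le> x1' \<and> 0 \<le> x2' \<and> g_H V E x1' x2' y1 y2 = 1 + \<delta> \<and>
     x1' * y1 + x2' * y2 \<le> x1 * y1 + x2 * y2"
proof -
  obtain t where t: "0 \<le> t" "t \<le> 1"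
    "(\<Sum>S\<in>indep_sets V E. t ^ nexp E S * gterm E x1 x2 y1 y2 S) = 1 + \<delta>"
    using ivt_sum[of "indep_sets V E" "gterm E x1 x2 y1 y2" "nexp E" \<delta>, OF finite_indep[OF assms(1)] empty_indep gterm_empty nexp_empty nexp_pos[OF assms(1)]
       assms(6)[unfolded g_H_sum] assms(7)] by blast
  have "g_H V E (t*x1) (t*x2) y1 y2 = 1 + \<delta>"
    unfolding g_H_sum using t by (simp add: gterm_scale)
  moreover have "(t*x1) * y1 + (t*x2) * y2 \<le> x1 * y1 + x2 * y2"
  proof -
    have "(t*x1) * y1 + (t*x2) * y2 = t * (x1 * y1 + x2 * y2)" by algebra
    also have "\<dots> \<le> 1 * (x1 * y1 + x2 * y2)"
      by (rule mult_right_mono) (use t assms in auto)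
    finally show ?thesis by simp
  qed
  ultimately show ?thesis using t assms by (intro exI[of _ "t*x1"] exI[of _ "t*x2"]) auto
qed



context
  fixes V :: "'a set" and E :: "('a \<times> 'a) set"
  assumes fV: "finite V" and EV: "E \<subseteq> V \<times> V"
begin

lemma finE: "finite E"
  using finite_subset[OF EV] fV by auto

lemma nbhd_sub: "nbhd E S \<subseteq> V" "out_nbhd E S \<subseteq> V" "in_nbhd E S \<subseteq> V"
  using EV unfolding nbhd_def out_nbhd_def in_nbhd_def by auto

lemma FS_sub: "FS_edges E S \<subseteq> E"
  unfolding FS_edges_def edges_between_def by auto

lemma finFS: "finite (FS_edges E S)"
  using finite_subset[OF FS_sub finE] .

lemma mfm_out_le:
  assumes w: "max_frac_matching E S w"
  shows "(\<Sum>e\<in>edges_between E S (nbhd E S). w e) \<le> card (out_nbhd E S)"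
    and "0 \<le> (\<Sum>e\<in>edges_between E S (nbhd E S). w e)"
proof -
  let ?ES = "edges_between E S (nbhd E S)"
  let ?N = "out_nbhd E S"
  have ESsub: "?ES \<subseteq> FS_edges E S" unfolding FS_edges_def by auto
  have finES: "finite ?ES" using finite_subset[OF ESsub finFS] .
  have finN: "finite ?N" using finite_subset[OF nbhd_sub(2) fV] .
  have nn: "\<And>e. e \<in> FS_edges E S \<Longrightarrow> 0 \<le> w e" using w unfolding max_frac_matching_def by auto
  show "0 \<le> (\<Sum>e\<in>?ES. w e)" using nn ESsub by (intro sum_nonneg) auto
  have img: "snd ` ?ES \<subseteq> ?N"
    unfolding edges_between_def nbhd_def out_nbhd_def in_nbhd_def by force
  have "(\<Sum>e\<in>?ES. w e) = (\<Sum>v\<in>?N. \<Sum>e\<in>{e\<in>?ES. snd e = v}. w e)"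
    using sum.group[OF finES finN img, of w] by simp
  also have "\<dots> \<le> (\<Sum>v\<in>?N. 1)"
  proof (rule sum_mono)
    fix v assume v: "v \<in> ?N"
    have "(\<Sum>e\<in>{e\<in>?ES. snd e = v}. w e) \<le> (\<Sum>e\<in>{e\<in>FS_edges E S. fst e = v \<or> snd e = v}. w e)"
      by (rule sum_mono2) (use finFS ESsub nn in auto)
    also have "\<dots> \<le> 1" using w v unfolding max_frac_matching_def nbhd_def by auto
    finally show "(\<Sum>e\<in>{e\<in>?ES. snd e = v}. w e) \<le> 1" .
  qed
  finally show "(\<Sum>e\<in>?ES. w e) \<le> card ?N" by simp
qed

lemma mfm_in_le:
  assumes w: "max_frac_matching E S w"
  shows "(\<Sum>e\<in>edges_between E (nbhd E S) S. w e) \<le> card (in_nbhd E S)"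
    and "0 \<le> (\<Sum>e\<in>edges_between E (nbhd E S) S. w e)"
proof -
  let ?ES = "edges_between E (nbhd E S) S"
  let ?N = "in_nbhd E S"
  have ESsub: "?ES \<subseteq> FS_edges E S" unfolding FS_edges_def by auto
  have finES: "finite ?ES" using finite_subset[OF ESsub finFS] .
  have finN: "finite ?N" using finite_subset[OF nbhd_sub(3) fV] .
  have nn: "\<And>e. e \<in> FS_edges E S \<Longrightarrow> 0 \<le> w e" using w unfolding max_frac_matching_def by auto
  show "0 \<le> (\<Sum>e\<in>?ES. w e)" using nn ESsub by (intro sum_nonneg) auto
  have img: "fst ` ?ES \<subseteq> ?N"
    unfolding edges_between_def nbhd_def out_nbhd_def in_nbhd_def by force
  have "(\<Sum>e\<in>?ES. w e) = (\<Sum>v\<in>?N. \<Sum>e\<in>{e\<in>?ES. fst e = v}. w e)"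
    using sum.group[OF finES finN img, of w] by simp
  also have "\<dots> \<le> (\<Sum>v\<in>?N. 1)"
  proof (rule sum_mono)
    fix v assume v: "v \<in> ?N"
    have "(\<Sum>e\<in>{e\<in>?ES. fst e = v}. w e) \<le> (\<Sum>e\<in>{e\<in>FS_edges E S. fst e = v \<or> snd e = v}. w e)"
      by (rule sum_mono2) (use finFS ESsub nn in auto)
    also have "\<dots> \<le> 1" using w v unfolding max_frac_matching_def nbhd_def by auto
    finally show "(\<Sum>e\<in>{e\<in>?ES. fst e = v}. w e) \<le> 1" .
  qed
  finally show "(\<Sum>e\<in>?ES. w e) \<le> card ?N" by simp
qed

lemma aS_bounds: "0 \<le> a_S E S" "a_S E S \<le> card (out_nbhd E S)"
  and aS_upper: "max_frac_matching E S w \<Longrightarrow> (\<Sum>e\<in>edges_between E S (nbhd E S). w e) \<le> a_S E S"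
proof -
  let ?A = "{(\<Sum>e\<in>edges_between E S (nbhd E S). w e) | w. max_frac_matching E S w}"
  have bdd: "bdd_above ?A" using mfm_out_le(1) by (auto intro!: bdd_aboveI[of _ "real (card (out_nbhd E S))"])
  have up: "\<And>w'. max_frac_matching E S w' \<Longrightarrow> (\<Sum>e\<in>edges_between E S (nbhd E S). w' e) \<le> a_S E S"
    unfolding a_S_def by (auto intro!: cSup_upper bdd)
  show "max_frac_matching E S w \<Longrightarrow> (\<Sum>e\<in>edges_between E S (nbhd E S). w e) \<le> a_S E S" by (rule up)
  show "0 \<le> a_S E S"
  proof (cases "\<exists>w. max_frac_matching E S w")
    case True
    then obtain w where w: "max_frac_matching E S w" by blast
    show ?thesis using up[OF w] mfm_out_le(2)[OF w] by linarith
  qed (simp add: a_S_def)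
  show "a_S E S \<le> card (out_nbhd E S)"
    unfolding a_S_def using mfm_out_le(1) by (auto intro!: cSup_least)
qed

lemma bS_bounds: "0 \<le> b_S E S" "b_S E S \<le> card (in_nbhd E S)"
  and bS_upper: "max_frac_matching E S w \<Longrightarrow> (\<Sum>e\<in>edges_between E (nbhd E S) S. w e) \<le> b_S E S"
proof -
  let ?A = "{(\<Sum>e\<in>edges_between E (nbhd E S) S. w e) | w. max_frac_matching E S w}"
  have bdd: "bdd_above ?A" using mfm_in_le(1) by (auto intro!: bdd_aboveI[of _ "real (card (in_nbhd E S))"])
  have up: "\<And>w'. max_frac_matching E S w' \<Longrightarrow> (\<Sum>e\<in>edges_between E (nbhd E S) S. w' e) \<le> b_S E S"
    unfolding b_S_def by (auto intro!: cSup_upper bdd)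
  show "max_frac_matching E S w \<Longrightarrow> (\<Sum>e\<in>edges_between E (nbhd E S) S. w e) \<le> b_S E S" by (rule up)
  show "0 \<le> b_S E S"
  proof (cases "\<exists>w. max_frac_matching E S w")
    case True
    then obtain w where w: "max_frac_matching E S w" by blast
    show ?thesis using up[OF w] mfm_in_le(2)[OF w] by linarith
  qed (simp add: b_S_def)
  show "b_S E S \<le> card (in_nbhd E S)"
    unfolding b_S_def using mfm_in_le(1) by (auto intro!: cSup_least)
qed

lemma fterm_le_gterm:
  assumes "0 \<le> x1" "0 \<le> x2" "0 \<le> y1" "y1 \<le> 1" "0 \<le> y2" "y2 \<le> 1"
  shows "fterm E x1 x2 y1 y2 S \<le> gterm E x1 x2 y1 y2 S"
proof -
  have "y1 ^ card (out_nbhd E S) \<le> rpow y1 (a_S E S)"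
    by (rule pow_le_rpow) (use assms aS_bounds in auto)
  moreover have "y2 ^ card (in_nbhd E S) \<le> rpow y2 (b_S E S)"
    by (rule pow_le_rpow) (use assms bS_bounds in auto)
  ultimately show ?thesis unfolding fterm_def gterm_def
    using assms by (intro mult_mono mult_nonneg_nonneg) (auto simp: rpow_nonneg)
qed

lemma f_le_g:
  assumes "0 \<le> x1" "0 \<le> x2" "0 \<le> y1" "y1 \<le> 1" "0 \<le> y2" "y2 \<le> 1"
  shows "f_H V E x1 x2 y1 y2 \<le> g_H V E x1 x2 y1 y2"
  unfolding f_H_sum g_H_sum by (rule sum_mono) (rule fterm_le_gterm[OF assms])

end


context
  fixes V :: "'a set" and E :: "('a \<times> 'a) set"
  assumes fV: "finite V" and EV: "E \<subseteq> V \<times> V" and noloop: "\<forall>v. (v, v) \<notin> E" and Ene: "E \<noteq> {}"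
begin

lemma fin_succ: "finite {u. (v, u) \<in> E}" and fin_pred: "finite {u. (u, v) \<in> E}"
  using EV by (auto intro: finite_subset[OF _ fV])

lemma deg_le: "v \<in> V \<Longrightarrow> deg E v \<le> maxdeg V E"
  unfolding maxdeg_def using fV by (auto intro: Max_ge)

lemma D_pos: "1 \<le> maxdeg V E"
proof -
  obtain u x where ux: "(u, x) \<in> E" using Ene by auto
  then have uV: "u \<in> V" using EV by auto
  have "0 < outdeg E u" unfolding outdeg_def using fin_succ[of u] ux by (subst card_gt_0_iff) auto
  then show ?thesis using deg_le[OF uV] unfolding deg_def by linarith
qed

lemma card_out: "card {e\<in>E. fst e = v} = outdeg E v"
proof -
  have "{e\<in>E. fst e = v} = Pair v ` {u. (v, u) \<in> E}" by force
  then show ?thesis unfolding outdeg_def by (simp add: card_image inj_on_def)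
qed

lemma card_in: "card {e\<in>E. snd e = v} = indeg E v"
proof -
  have "{e\<in>E. snd e = v} = (\<lambda>u. (u, v)) ` {u. (u, v) \<in> E}" by force
  then show ?thesis unfolding indeg_def by (simp add: card_image inj_on_def)
qed

lemma fin_out: "finite {e\<in>E. fst e = v}" and fin_in: "finite {e\<in>E. snd e = v}"
  using finE[OF fV EV] by auto

lemma indep_deg: "S \<in> indep_sets V E \<Longrightarrow> u \<in> S \<Longrightarrow> deg E u = maxdeg V E"
  unfolding indep_sets_def maxdeg_verts_def by auto

lemma indep_noedge: "S \<in> indep_sets V E \<Longrightarrow> u \<in> S \<Longrightarrow> v \<in> S \<Longrightarrow> (u, v) \<notin> E"
  unfolding indep_sets_def by auto

lemma ES_eq: "S \<in> indep_sets V E \<Longrightarrow> edges_between E S (nbhd E S) = {e\<in>E. fst e \<in> S}"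
  unfolding edges_between_def nbhd_def out_nbhd_def in_nbhd_def
  using indep_noedge by fastforce

lemma ET_eq: "S \<in> indep_sets V E \<Longrightarrow> edges_between E (nbhd E S) S = {e\<in>E. snd e \<in> S}"
  unfolding edges_between_def nbhd_def out_nbhd_def in_nbhd_def
  using indep_noedge by fastforce

lemma inc_eq: "S \<in> indep_sets V E \<Longrightarrow> v \<in> S \<Longrightarrow>
   {e\<in>FS_edges E S. fst e = v \<or> snd e = v} = {e\<in>E. fst e = v} \<union> {e\<in>E. snd e = v}"
  unfolding FS_edges_def using ES_eq ET_eq by auto

lemma inc_sub: "{e\<in>FS_edges E S. fst e = v \<or> snd e = v} \<subseteq> {e\<in>E. fst e = v} \<union> {e\<in>E. snd e = v}"
  unfolding FS_edges_def edges_between_def by auto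

lemma w0_mfm: assumes S: "S \<in> indep_sets V E"
  shows "max_frac_matching E S (\<lambda>e. 1 / real (maxdeg V E))"
proof -
  let ?D = "real (maxdeg V E)"
  have D: "1 \<le> ?D" using D_pos by simp
  have cardU: "card ({e\<in>E. fst e = v} \<union> {e\<in>E. snd e = v}) \<le> deg E v" for v
    using card_Un_le[of "{e\<in>E. fst e = v}" "{e\<in>E. snd e = v}"] card_out card_in unfolding deg_def by simp
  have A: "(\<Sum>e\<in>{e\<in>FS_edges E S. fst e = v \<or> snd e = v}. 1 / ?D) \<le> 1" if v: "v \<in> S \<union> nbhd E S" for v
  proof -
    have vV: "v \<in> V" using v indep_sub[OF S] nbhd_sub[OF fV EV] by auto
    have "card {e\<in>FS_edges E S. fst e = v \<or> snd e = v} \<le> card ({e\<in>E. fst e = v} \<union> {e\<in>E. snd e = v})"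
      by (rule card_mono) (use fin_out fin_in inc_sub in auto)
    also have "\<dots> \<le> maxdeg V E" using cardU[of v] deg_le[OF vV] by linarith
    finally have "real (card {e\<in>FS_edges E S. fst e = v \<or> snd e = v}) \<le> ?D" by simp
    then show ?thesis using D by (simp add: divide_le_eq_1)
  qed
  have B: "(\<Sum>e\<in>{e\<in>FS_edges E S. fst e = v \<or> snd e = v}. 1 / ?D) = 1" if v: "v \<in> S" for v
  proof -
    have disj: "{e\<in>E. fst e = v} \<inter> {e\<in>E. snd e = v} = {}" using noloop by auto
    have "card {e\<in>FS_edges E S. fst e = v \<or> snd e = v} = outdeg E v + indeg E v"
      unfolding inc_eq[OF S v] using card_Un_disjoint[OF fin_out fin_in disj] card_out card_in by simp
    also have "\<dots> = maxdeg V E" using indep_deg[OF S v] unfolding deg_def by simp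
    finally show ?thesis using D by simp
  qed
  show ?thesis unfolding max_frac_matching_def using A B D by auto
qed

lemma alpha_eq: assumes S: "S \<in> indep_sets V E"
  shows "(\<Sum>e\<in>edges_between E S (nbhd E S). 1 / real (maxdeg V E)) = (\<Sum>u\<in>S. real (outdeg E u) / real (maxdeg V E))"
proof -
  have fS: "finite S" using finite_subset[OF indep_sub[OF S] fV] .
  have fin: "finite {e\<in>E. fst e \<in> S}" using finE[OF fV EV] by auto
  have "(\<Sum>e\<in>{e\<in>E. fst e \<in> S}. 1 / real (maxdeg V E)) =
      (\<Sum>u\<in>S. \<Sum>e\<in>{e\<in>{e\<in>E. fst e \<in> S}. fst e = u}. 1 / real (maxdeg V E))"
    by (rule sum.group[OF fin fS, of fst "\<lambda>e. 1 / real (maxdeg V E)", symmetric]) auto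
  also have "\<dots> = (\<Sum>u\<in>S. real (outdeg E u) / real (maxdeg V E))"
  proof (rule sum.cong)
    fix u assume u: "u \<in> S"
    have "{e\<in>{e\<in>E. fst e \<in> S}. fst e = u} = {e\<in>E. fst e = u}" using u by auto
    then show "(\<Sum>e\<in>{e\<in>{e\<in>E. fst e \<in> S}. fst e = u}. 1 / real (maxdeg V E)) = real (outdeg E u) / real (maxdeg V E)"
      using card_out[of u] by simp
  qed simp
  finally show ?thesis using ES_eq[OF S] by simp
qed

lemma beta_eq: assumes S: "S \<in> indep_sets V E"
  shows "(\<Sum>e\<in>edges_between E (nbhd E S) S. 1 / real (maxdeg V E)) = (\<Sum>u\<in>S. real (indeg E u) / real (maxdeg V E))"
proof -
  have fS: "finite S" using finite_subset[OF indep_sub[OF S] fV] .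
  have fin: "finite {e\<in>E. snd e \<in> S}" using finE[OF fV EV] by auto
  have "(\<Sum>e\<in>{e\<in>E. snd e \<in> S}. 1 / real (maxdeg V E)) =
      (\<Sum>u\<in>S. \<Sum>e\<in>{e\<in>{e\<in>E. snd e \<in> S}. snd e = u}. 1 / real (maxdeg V E))"
    by (rule sum.group[OF fin fS, of snd "\<lambda>e. 1 / real (maxdeg V E)", symmetric]) auto
  also have "\<dots> = (\<Sum>u\<in>S. real (indeg E u) / real (maxdeg V E))"
  proof (rule sum.cong)
    fix u assume u: "u \<in> S"
    have "{e\<in>{e\<in>E. snd e \<in> S}. snd e = u} = {e\<in>E. snd e = u}" using u by auto
    then show "(\<Sum>e\<in>{e\<in>{e\<in>E. snd e \<in> S}. snd e = u}. 1 / real (maxdeg V E)) = real (indeg E u) / real (maxdeg V E)"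
      using card_in[of u] by simp
  qed simp
  finally show ?thesis using ET_eq[OF S] by simp
qed


lemma gterm_bound:
  assumes S: "S \<in> indep_sets V E"
    and x: "0 \<le> x1" "0 \<le> x2" and y: "0 \<le> y1" "y1 \<le> 1" "0 \<le> y2" "y2 \<le> 1"
  shows "gterm E x1 x2 y1 y2 S \<le> fterm E (x1*y1 + x2*y2) (x1*y1 + x2*y2) 1 1 S"
proof -
  let ?D = "real (maxdeg V E)"
  have D: "1 \<le> ?D" using D_pos by simp
  have fS: "finite S" using finite_subset[OF indep_sub[OF S] fV] .
  define P where "P = {v\<in>S. indeg E v = 0}"
  define Q where "Q = {v\<in>S. outdeg E v = 0}"
  define R where "R = {v\<in>S. indeg E v \<noteq> 0 \<and> outdeg E v \<noteq> 0}"
  have p: "v_plus E S = card P" and q: "v_minus E S = card Q" and r: "v_pm E S = card R"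
    unfolding P_def Q_def R_def v_plus_def v_minus_def v_pm_def by simp_all
  have degS: "\<And>u. u \<in> S \<Longrightarrow> real (outdeg E u) + real (indeg E u) = ?D"
    using indep_deg[OF S] unfolding deg_def by (metis add.commute of_nat_add)
  define \<alpha> where "\<alpha> = (\<Sum>u\<in>S. real (outdeg E u) / ?D)"
  define \<beta> where "\<beta> = (\<Sum>u\<in>S. real (indeg E u) / ?D)"
  have a_ge: "\<alpha> \<le> a_S E S"
    using aS_upper[OF fV EV w0_mfm[OF S]] alpha_eq[OF S] unfolding \<alpha>_def by simp
  have b_ge: "\<beta> \<le> b_S E S"
    using bS_upper[OF fV EV w0_mfm[OF S]] beta_eq[OF S] unfolding \<beta>_def by simp
  have "real (card P) = (\<Sum>u\<in>P. real (outdeg E u) / ?D)"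
  proof -
    have "(\<Sum>u\<in>P. real (outdeg E u) / ?D) = (\<Sum>u\<in>P. 1)"
    proof (rule sum.cong)
      fix u assume "u \<in> P"
      then have "real (outdeg E u) = ?D" using degS[of u] unfolding P_def by auto
      then show "real (outdeg E u) / ?D = 1" using D by simp
    qed simp
    then show ?thesis by simp
  qed
  also have "\<dots> \<le> \<alpha>" unfolding \<alpha>_def
    by (rule sum_mono2) (use fS P_def in auto)
  finally have pa: "real (card P) \<le> \<alpha>" .
  have "real (card Q) = (\<Sum>u\<in>Q. real (indeg E u) / ?D)"
  proof -
    have "(\<Sum>u\<in>Q. real (indeg E u) / ?D) = (\<Sum>u\<in>Q. 1)"
    proof (rule sum.cong)
      fix u assume "u \<in> Q"
      then have "real (indeg E u) = ?D" using degS[of u] unfolding Q_def by auto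
      then show "real (indeg E u) / ?D = 1" using D by simp
    qed simp
    then show ?thesis by simp
  qed
  also have "\<dots> \<le> \<beta>" unfolding \<beta>_def
    by (rule sum_mono2) (use fS Q_def in auto)
  finally have qb: "real (card Q) \<le> \<beta>" .
  have "\<alpha> + \<beta> = (\<Sum>u\<in>S. (real (outdeg E u) + real (indeg E u)) / ?D)"
    unfolding \<alpha>_def \<beta>_def sum.distrib[symmetric] add_divide_distrib ..
  also have "\<dots> = (\<Sum>u\<in>S. 1)" using degS D by (intro sum.cong) auto
  also have "\<dots> = real (card S)" by simp
  also have "card S = card P + card Q + card R"
  proof -
    have PQ: "P \<inter> Q = {}" using degS D unfolding P_def Q_def by fastforce
    have PQR: "(P \<union> Q) \<inter> R = {}" unfolding P_def Q_def R_def by auto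
    have U: "S = (P \<union> Q) \<union> R" unfolding P_def Q_def R_def by auto
    have fP: "finite P" "finite Q" "finite R" using fS unfolding P_def Q_def R_def by auto
    show ?thesis unfolding U using card_Un_disjoint[OF _ _ PQR] card_Un_disjoint[OF _ _ PQ] fP
      by simp
  qed
  finally have abs: "\<alpha> + \<beta> = real (card P + card Q + card R)" .
  define m where "m = min x1 x2"
  define M where "M = max y1 y2"
  define c where "c = x1*y1 + x2*y2"
  have key: "rpow y1 (a_S E S) * rpow y2 (b_S E S) \<le> y1^card P * y2^card Q * M^card R"
    unfolding M_def by (rule key_L[OF y a_ge b_ge pa qb abs])
  have "gterm E x1 x2 y1 y2 S = x1^card P * x2^card Q * m^card R * (rpow y1 (a_S E S) * rpow y2 (b_S E S))"
    unfolding gterm_def p q r m_def by (simp add: mult_ac)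
  also have "\<dots> \<le> x1^card P * x2^card Q * m^card R * (y1^card P * y2^card Q * M^card R)"
    by (rule mult_left_mono[OF key]) (use x in \<open>simp add: m_def\<close>)
  also have "\<dots> = (x1*y1)^card P * (x2*y2)^card Q * (m*M)^card R"
    by (simp add: power_mult_distrib mult_ac)
  also have "\<dots> \<le> c^card P * c^card Q * c^card R"
  proof -
    have h1: "x1*y1 \<le> c" "x2*y2 \<le> c" using x y unfolding c_def by auto
    have h2: "m*M \<le> c"
    proof (cases "y1 \<le> y2")
      case True
      then have "m*M \<le> x2*y2" unfolding m_def M_def using x y by (simp add: mult_right_mono)
      then show ?thesis using h1 by linarith
    next
      case False
      then have "m*M \<le> x1*y1" unfolding m_def M_def using x y by (simp add: mult_right_mono)
      then show ?thesis using h1 by linarith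
    qed
    have nn: "0 \<le> x1*y1" "0 \<le> x2*y2" "0 \<le> m*M" using x y unfolding m_def M_def by auto
    show ?thesis
      by (intro mult_mono power_mono h1 h2 nn zero_le_power mult_nonneg_nonneg) (use nn h1 in auto)
  qed
  also have "\<dots> = fterm E c c 1 1 S"
    unfolding fterm_def p q r by simp
  finally show ?thesis unfolding c_def .
qed

lemma point_F_from_G:
  assumes x: "0 \<le> x1" "0 \<le> x2" and y: "0 \<le> y1" "y1 \<le> 1" "0 \<le> y2" "y2 \<le> 1"
    and g: "g_H V E x1 x2 y1 y2 = 1 + \<delta>" and d: "0 < \<delta>"
  shows "\<exists>x1' x2'. 0 \<le> x1' \<and> 0 \<le> x2' \<and> f_H V E x1' x2' 1 1 = 1 + \<delta> \<and>
     x1' * 1 + x2' * 1 \<le> 2 * (x1 * y1 + x2 * y2)"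
proof -
  let ?c = "x1*y1 + x2*y2"
  have c: "0 \<le> ?c" using x y by auto
  have "1 + \<delta> \<le> f_H V E ?c ?c 1 1"
    unfolding g[symmetric] g_H_sum f_H_sum
    by (rule sum_mono) (rule gterm_bound[OF _ x y])
  from point_f[OF fV c c _ _ this d] obtain x1' x2' where
    "0 \<le> x1'" "0 \<le> x2'" "f_H V E x1' x2' 1 1 = 1 + \<delta>" "x1' * 1 + x2' * 1 \<le> ?c * 1 + ?c * 1" by auto
  then show ?thesis by (intro exI[of _ x1'] exI[of _ x2']) auto
qed

end


lemma aS_noedge: "a_S {} S = 0" and bS_noedge: "b_S {} S = 0"
  unfolding a_S_def b_S_def edges_between_def by auto

lemma f_eq_g_noedge: "f_H V {} x1 x2 y1 y2 = g_H V {} x1 x2 y1 y2"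
  unfolding f_H_sum g_H_sum fterm_def gterm_def aS_noedge bS_noedge
  by (simp add: out_nbhd_def in_nbhd_def rpow_def)

lemma Inf_2: fixes A :: "ereal set" shows "Inf ((\<lambda>z. 2 * z) ` A) \<le> 2 * Inf A"
proof -
  have "ereal (1/2) * Inf ((\<lambda>z. 2 * z) ` A) \<le> Inf A"
  proof (rule Inf_greatest)
    fix z assume z: "z \<in> A"
    have "ereal (1/2) * Inf ((\<lambda>z. 2 * z) ` A) \<le> ereal (1/2) * (2 * z)"
      by (rule ereal_mult_left_mono) (use z in \<open>auto intro: Inf_lower\<close>)
    also have "\<dots> = z" by (cases z) auto
    finally show "ereal (1/2) * Inf ((\<lambda>z. 2 * z) ` A) \<le> z" .
  qed
  then have "2 * (ereal (1/2) * Inf ((\<lambda>z. 2 * z) ` A)) \<le> 2 * Inf A"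
    by (rule ereal_mult_left_mono) simp
  moreover have "2 * (ereal (1/2) * Inf ((\<lambda>z. 2 * z) ` A)) = Inf ((\<lambda>z. 2 * z) ` A)"
    by (cases "Inf ((\<lambda>z. 2 * z) ` A)") auto
  ultimately show ?thesis by simp
qed

theorem proposition5p6:
  fixes V :: "'a set" and E :: "('a \<times> 'a) set" and \<delta> :: real
  assumes "finite V" and "E \<subseteq> V \<times> V" and "\<forall>v. (v, v) \<notin> E" and "\<delta> > 0"
  shows "G_H V E \<delta> \<le> F_H V E \<delta> \<and> F_H V E \<delta> \<le> 2 * G_H V E \<delta>"
proof
  let ?Fs = "{ereal (x1 * y1 + x2 * y2) | x1 x2 y1 y2.
      0 \<le> x1 \<and> 0 \<le> x2 \<and> 0 \<le> y1 \<and> y1 \<le> 1 \<and> 0 \<le> y2 \<and> y2 \<le> 1 \<and>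
      f_H V E x1 x2 y1 y2 = 1 + \<delta>}"
  let ?Gs = "{ereal (x1 * y1 + x2 * y2) | x1 x2 y1 y2.
      0 \<le> x1 \<and> 0 \<le> x2 \<and> 0 \<le> y1 \<and> y1 \<le> 1 \<and> 0 \<le> y2 \<and> y2 \<le> 1 \<and>
      g_H V E x1 x2 y1 y2 = 1 + \<delta>}"
  show "G_H V E \<delta> \<le> F_H V E \<delta>"
    unfolding G_H_def F_H_def
  proof (rule Inf_mono)
    fix b assume "b \<in> ?Fs"
    then obtain x1 x2 y1 y2 where b: "b = ereal (x1 * y1 + x2 * y2)"
      and c: "0 \<le> x1" "0 \<le> x2" "0 \<le> y1" "y1 \<le> 1" "0 \<le> y2" "y2 \<le> 1"
      and f: "f_H V E x1 x2 y1 y2 = 1 + \<delta>" by blast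
    have "1 + \<delta> \<le> g_H V E x1 x2 y1 y2"
      using f_le_g[OF assms(1,2) c] f by simp
    from point_g[OF assms(1) c(1,2,3,5) this assms(4)] obtain x1' x2' where
      p: "0 \<le> x1'" "0 \<le> x2'" "g_H V E x1' x2' y1 y2 = 1 + \<delta>"
        "x1' * y1 + x2' * y2 \<le> x1 * y1 + x2 * y2" by blast
    have "ereal (x1' * y1 + x2' * y2) \<in> ?Gs" using p c by blast
    moreover have "ereal (x1' * y1 + x2' * y2) \<le> b" using p b by simp
    ultimately show "\<exists>a\<in>?Gs. a \<le> b" by blast
  qed
  have "F_H V E \<delta> \<le> Inf ((\<lambda>z. 2 * z) ` ?Gs)"
    unfolding F_H_def
  proof (rule Inf_mono)
    fix b assume "b \<in> (\<lambda>z. 2 * z) ` ?Gs"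
    then obtain x1 x2 y1 y2 where b: "b = 2 * ereal (x1 * y1 + x2 * y2)"
      and c: "0 \<le> x1" "0 \<le> x2" "0 \<le> y1" "y1 \<le> 1" "0 \<le> y2" "y2 \<le> 1"
      and g: "g_H V E x1 x2 y1 y2 = 1 + \<delta>" by blast
    show "\<exists>a\<in>?Fs. a \<le> b"
    proof (cases "E = {}")
      case True
      have "f_H V E x1 x2 y1 y2 = 1 + \<delta>" using g f_eq_g_noedge[of V x1 x2 y1 y2] True by simp
      then have "ereal (x1 * y1 + x2 * y2) \<in> ?Fs" using c by blast
      moreover have "ereal (x1 * y1 + x2 * y2) \<le> b" using c b by simp
      ultimately show ?thesis by blast
    next
      case False
      from point_F_from_G[OF assms(1,2,3) False c g assms(4)] obtain x1' x2' where
        p: "0 \<le> x1'" "0 \<le> x2'" "f_H V E x1' x2' 1 1 = 1 + \<delta>"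
          "x1' * 1 + x2' * 1 \<le> 2 * (x1 * y1 + x2 * y2)" by blast
      have "ereal (x1' * 1 + x2' * 1) \<in> ?Fs" using p by fastforce
      moreover have "ereal (x1' * 1 + x2' * 1) \<le> b" using p b by simp
      ultimately show ?thesis by blast
    qed
  qed
  also have "\<dots> \<le> 2 * G_H V E \<delta>" unfolding G_H_def by (rule Inf_2)
  finally show "F_H V E \<delta> \<le> 2 * G_H V E \<delta>" .
qed

end
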